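(* Fix $\varepsilon\in\mathbb{R}^n_{\ge0}$ and $\delta\in(0,1]$, and let $\mathcal{C}^\star\subseteq\mathcal{R}$ be the set of all rankings that satisfy the $(\varepsilon,\delta)$-constraint. For any non-empty subset $\mathcal{C}\subseteq\mathcal{R}$ with $\mathcal{C}\ne\mathcal{C}^\star$, at least one of the following holds: (i) there exists a matrix $W\in\mathbb{R}^{m\times n}_{\ge0}$ such that $R_{\mathcal{C}}$ does not satisfy the $(\varepsilon,\delta)$-constraint; (ii) there exists a matrix $W\in\mathbb{R}^{m\times n}_{\ge0}$ such that $\langle R_{\mathcal{C}},W\rangle\le\langle R_{\mathcal{C}^\star},W\rangle\cdot(1-\frac1n)$.
   Context: $\mathcal{R}$ is the set of rankings: matrices $R\in\{0,1\}^{m\times n}$ with $\sum_{j} R_{ij}\le 1$ for every item $i\in[m]$ and $\sum_{i} R_{ij}=1$ for every position $j\in[n]$; $\langle R,W\rangle=\sum_{i,j}R_{ij}W_{ij}$. For a non-empty $\mathcal{C}\subseteq\mathcal{R}$ and utility matrix $W$, $R_{\mathcal{C}}:=\arg\max_{R\in\mathcal{C}}\langle R,W\rangle$. Noise model: given $P\in[0,1]^{m\times p}$, the groups $G_1,\dots,G_p\subseteq[m]$ are random with $\Pr[i\in G_\ell]=P_{i\ell}$, events concerning distinct items independent; given $U\in\mathbb{Z}_+^{n\times p}$, a ranking $R$ satisfies the $(\varepsilon,\delta)$-constraint if with probability at least $1-\delta$, $\sum_{i\in G_\ell}\sum_{j=1}^kR_{ij}\le U_{k\ell}(1+\varepsilon_k)$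 for all $k\in[n],\ell\in[p]$. *)

theory Defs
  imports "HOL-Probability.Probability"
begin

text \<open>Conventions: items are indexed by 1..m, positions by 1..n, groups by 1..p.
  Matrices are functions nat => nat => _, rankings vanish outside {1..m} x {1..n}.\<close>

definition rankings :: "nat \<Rightarrow> nat \<Rightarrow> (nat \<Rightarrow> nat \<Rightarrow> nat) set" where
  "rankings m n = {R.
     (\<forall>i j. R i j \<in> {0, 1}) \<and>
     (\<forall>i j. (i \<notin> {1..m} \<or> j \<notin> {1..n}) \<longrightarrow> R i j = 0) \<and>
     (\<forall>i\<in>{1..m}. (\<Sum>j\<in>{1..n}. R i j) \<le> 1) \<and>
     (\<forall>j\<in>{1..n}. (\<Sum>i\<in>{1..m}. R i j) = 1)}"

definition inner_rw :: "nat \<Rightarrow> nat \<Rightarrow> (nat \<Rightarrow> nat \<Rightarrow> nat) \<Rightarrow> (nat \<Rightarrow> nat \<Rightarrow> real) \<Rightarrow> real" where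
  "inner_rw m n R W = (\<Sum>i\<in>{1..m}. \<Sum>j\<in>{1..n}. real (R i j) * W i j)"

text \<open>R is a maximiser of <R,W> over C (i.e. a possible value of R_C).\<close>
definition is_RC :: "nat \<Rightarrow> nat \<Rightarrow> (nat \<Rightarrow> nat \<Rightarrow> nat) set \<Rightarrow> (nat \<Rightarrow> nat \<Rightarrow> real)
    \<Rightarrow> (nat \<Rightarrow> nat \<Rightarrow> nat) \<Rightarrow> bool" where
  "is_RC m n C W R \<longleftrightarrow> R \<in> C \<and> (\<forall>R'\<in>C. inner_rw m n R' W \<le> inner_rw m n R W)"

text \<open>Noise model: item i independently draws its set of groups from the distribution Q i
  (a distribution on subsets of groups); G_l = {i. l \<in> g i}.\<close>
definition group_law :: "nat \<Rightarrow> (nat \<Rightarrow> nat set pmf) \<Rightarrow> (nat \<Rightarrow> nat set) pmf" where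
  "group_law m Q = Pi_pmf {1..m} {} Q"

definition noise_model :: "nat \<Rightarrow> nat \<Rightarrow> (nat \<Rightarrow> nat \<Rightarrow> real) \<Rightarrow> (nat \<Rightarrow> nat set pmf) \<Rightarrow> bool" where
  "noise_model m p P Q \<longleftrightarrow>
     (\<forall>i\<in>{1..m}. \<forall>l\<in>{1..p}. measure_pmf.prob (Q i) {S. l \<in> S} = P i l)"

definition sat_constraint :: "nat \<Rightarrow> nat \<Rightarrow> nat \<Rightarrow> (nat \<Rightarrow> nat set pmf) \<Rightarrow> (nat \<Rightarrow> nat \<Rightarrow> nat)
    \<Rightarrow> (nat \<Rightarrow> real) \<Rightarrow> real \<Rightarrow> (nat \<Rightarrow> nat \<Rightarrow> nat) \<Rightarrow> bool" where
  "sat_constraint m n p Q U eps \<delta> R \<longleftrightarrow>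
     measure_pmf.prob (group_law m Q)
       {g. \<forall>k\<in>{1..n}. \<forall>l\<in>{1..p}.
           (\<Sum>i\<in>{i\<in>{1..m}. l \<in> g i}. \<Sum>j\<in>{1..k}. real (R i j)) \<le> real (U k l) * (1 + eps k)}
     \<ge> 1 - \<delta>"

end

theory Submission
  imports Defs
begin

lemma rk_01: "R \<in> rankings m n \<Longrightarrow> R i j = 0 \<or> R i j = 1"
  unfolding rankings_def by auto

lemma rk_out: "R \<in> rankings m n \<Longrightarrow> (i \<notin> {1..m} \<or> j \<notin> {1..n}) \<Longrightarrow> R i j = 0"
  unfolding rankings_def by auto

lemma rk_col: "R \<in> rankings m n \<Longrightarrow> j \<in> {1..n} \<Longrightarrow> (\<Sum>i\<in>{1..m}. R i j) = 1"
  unfolding rankings_def by auto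

lemma col_unique:
  assumes R: "R \<in> rankings m n" and j: "j \<in> {1..n}" and i: "i \<in> {1..m}" and Ri: "R i j = 1"
    and i': "i' \<in> {1..m}" "i' \<noteq> i"
  shows "R i' j = 0"
proof -
  have "(\<Sum>k\<in>{1..m}. R k j) = R i j + (\<Sum>k\<in>{1..m}-{i}. R k j)"
    using i by (simp add: sum.remove)
  then have "(\<Sum>k\<in>{1..m}-{i}. R k j) = 0" using rk_col[OF R j] Ri by simp
  then show ?thesis using i' by simp
qed

lemma inner_nat:
  "inner_rw m n R' (\<lambda>i j. real (R i j)) = real (\<Sum>j\<in>{1..n}. \<Sum>i\<in>{1..m}. R' i j * R i j)"
  unfolding inner_rw_def by (simp only: of_nat_sum of_nat_mult) (rule sum.swap)

lemma col_le:
  assumes R: "R \<in> rankings m n" and R': "R' \<in> rankings m n" and j: "j \<in> {1..n}"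
  shows "(\<Sum>i\<in>{1..m}. R' i j * R i j) \<le> 1"
proof -
  have "(\<Sum>i\<in>{1..m}. R' i j * R i j) \<le> (\<Sum>i\<in>{1..m}. R i j)"
    apply (rule sum_mono) using rk_01[OF R'] by (metis mult_1 mult_zero_left order_refl zero_le)
  then show ?thesis using rk_col[OF R j] by simp
qed

lemma total_le:
  assumes R: "R \<in> rankings m n" and R': "R' \<in> rankings m n"
  shows "(\<Sum>j\<in>{1..n}. \<Sum>i\<in>{1..m}. R' i j * R i j) \<le> n"
proof -
  have "(\<Sum>j\<in>{1..n}. \<Sum>i\<in>{1..m}. R' i j * R i j) \<le> (\<Sum>j\<in>{1..n}. 1)"
    by (rule sum_mono) (rule col_le[OF R R'])
  then show ?thesis by simp
qed

lemma total_self: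
  assumes R: "R \<in> rankings m n"
  shows "(\<Sum>j\<in>{1..n}. \<Sum>i\<in>{1..m}. R i j * R i j) = n"
proof -
  have "(\<Sum>j\<in>{1..n}. \<Sum>i\<in>{1..m}. R i j * R i j) = (\<Sum>j\<in>{1..n}. 1)"
  proof (rule sum.cong)
    fix j assume j: "j \<in> {1..n}"
    have "(\<Sum>i\<in>{1..m}. R i j * R i j) = (\<Sum>i\<in>{1..m}. R i j)"
      apply (rule sum.cong) using rk_01[OF R] by auto
    then show "(\<Sum>i\<in>{1..m}. R i j * R i j) = 1" using rk_col[OF R j] by simp
  qed simp
  then show ?thesis by simp
qed

lemma total_eq:
  assumes R: "R \<in> rankings m n" and R': "R' \<in> rankings m n"
    and ge: "(\<Sum>j\<in>{1..n}. \<Sum>i\<in>{1..m}. R' i j * R i j) \<ge> n"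
  shows "R' = R"
proof -
  have colone: "(\<Sum>i\<in>{1..m}. R' i j * R i j) = 1" if j: "j \<in> {1..n}" for j
  proof (rule ccontr)
    assume ne: "(\<Sum>i\<in>{1..m}. R' i j * R i j) \<noteq> 1"
    then have z: "(\<Sum>i\<in>{1..m}. R' i j * R i j) = 0" using col_le[OF R R' j] by linarith
    have "(\<Sum>j\<in>{1..n}. \<Sum>i\<in>{1..m}. R' i j * R i j)
        = (\<Sum>i\<in>{1..m}. R' i j * R i j) + (\<Sum>j\<in>{1..n}-{j}. \<Sum>i\<in>{1..m}. R' i j * R i j)"
      using j by (simp add: sum.remove)
    also have "\<dots> \<le> 0 + (\<Sum>j\<in>{1..n}-{j}. 1)"
      using z by (intro add_mono sum_mono col_le[OF R R']) auto
    also have "\<dots> = n - 1" using j by simp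
    finally show False using ge j by simp
  qed
  show ?thesis
  proof (rule ext, rule ext)
    fix i j
    show "R' i j = R i j"
    proof (cases "i \<in> {1..m} \<and> j \<in> {1..n}")
      case False
      then show ?thesis using rk_out[OF R, of i j] rk_out[OF R', of i j] by auto
    next
      case True
      then have j: "j \<in> {1..n}" and i: "i \<in> {1..m}" by auto
      from colone[OF j] obtain k where k: "k \<in> {1..m}" "R' k j * R k j \<noteq> 0"
        by (metis (mono_tags, lifting) sum.neutral zero_neq_one)
      then have a: "R' k j = 1" "R k j = 1" using rk_01[OF R] rk_01[OF R'] by (metis mult_zero_left mult_zero_right)+
      show ?thesis
      proof (cases "i = k")
        case True then show ?thesis using a by simp
      next
        case False
        then show ?thesis using col_unique[OF R j k(1) a(2) i] col_unique[OF R' j k(1) a(1) i] by simp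
      qed
    qed
  qed
qed

lemma rank_n0: "R \<in> rankings m 0 \<Longrightarrow> R' \<in> rankings m 0 \<Longrightarrow> R = R'"
  using rk_out[of R m 0] rk_out[of R' m 0] by (intro ext) auto

theorem proposition7p2:
  fixes m n p :: nat
    and P :: "nat \<Rightarrow> nat \<Rightarrow> real"
    and Q :: "nat \<Rightarrow> nat set pmf"
    and U :: "nat \<Rightarrow> nat \<Rightarrow> nat"
    and eps :: "nat \<Rightarrow> real"
    and \<delta> :: real
    and C :: "(nat \<Rightarrow> nat \<Rightarrow> nat) set"
  assumes P_range: "\<forall>i\<in>{1..m}. \<forall>l\<in>{1..p}. 0 \<le> P i l \<and> P i l \<le> 1"
    and noise: "noise_model m p P Q"
    and eps_nonneg: "\<forall>k\<in>{1..n}. 0 \<le> eps k"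
    and delta: "0 < \<delta>" "\<delta> \<le> 1"
    and C_sub: "C \<subseteq> rankings m n"
    and C_ne: "C \<noteq> {}"
    and C_neq: "C \<noteq> {R \<in> rankings m n. sat_constraint m n p Q U eps \<delta> R}"
  shows "(\<exists>W. (\<forall>i j. 0 \<le> W i j) \<and>
            (\<forall>RC. is_RC m n C W RC \<longrightarrow> \<not> sat_constraint m n p Q U eps \<delta> RC))
       \<or> (\<exists>W. (\<forall>i j. 0 \<le> W i j) \<and>
            (\<forall>RC Rs. is_RC m n C W RC \<longrightarrow>
               is_RC m n {R \<in> rankings m n. sat_constraint m n p Q U eps \<delta> R} W Rs \<longrightarrow>
               inner_rw m n RC W \<le> inner_rw m n Rs W * (1 - 1 / real n)))"
proof (cases "\<exists>R\<in>C. \<not> sat_constraint m n p Q U eps \<delta> R")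
  case True
  then obtain R where R: "R \<in> C" "\<not> sat_constraint m n p Q U eps \<delta> R" by blast
  have Rr: "R \<in> rankings m n" using R C_sub by blast
  have "\<forall>RC. is_RC m n C (\<lambda>i j. real (R i j)) RC \<longrightarrow> \<not> sat_constraint m n p Q U eps \<delta> RC"
  proof (intro allI impI)
    fix RC assume h: "is_RC m n C (\<lambda>i j. real (R i j)) RC"
    then have RC: "RC \<in> rankings m n" using C_sub unfolding is_RC_def by blast
    have "inner_rw m n R (\<lambda>i j. real (R i j)) \<le> inner_rw m n RC (\<lambda>i j. real (R i j))"
      using h R(1) unfolding is_RC_def by blast
    then have "(\<Sum>j\<in>{1..n}. \<Sum>i\<in>{1..m}. RC i j * R i j) \<ge> n"
      unfolding inner_nat total_self[OF Rr] by (simp only: of_nat_le_iff)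
    then have "RC = R" by (rule total_eq[OF Rr RC])
    then show "\<not> sat_constraint m n p Q U eps \<delta> RC" using R by simp
  qed
  then show ?thesis by (intro disjI1 exI[of _ "\<lambda>i j. real (R i j)"]) auto
next
  case False
  then have sub: "C \<subseteq> {R \<in> rankings m n. sat_constraint m n p Q U eps \<delta> R}" using C_sub by blast
  with C_neq obtain R where R: "R \<in> rankings m n" "sat_constraint m n p Q U eps \<delta> R" "R \<notin> C"
    by blast
  obtain R0 where R0: "R0 \<in> C" using C_ne by blast
  have n1: "n \<ge> 1"
  proof (rule ccontr)
    assume "\<not> n \<ge> 1" then have "n = 0" by simp
    then have "R0 = R" using rank_n0 R(1) R0 C_sub by blast
    then show False using R R0 by simp
  qed
  have "\<forall>RC Rs. is_RC m n C (\<lambda>i j. real (R i j)) RC \<longrightarrow>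
               is_RC m n {R \<in> rankings m n. sat_constraint m n p Q U eps \<delta> R} (\<lambda>i j. real (R i j)) Rs \<longrightarrow>
               inner_rw m n RC (\<lambda>i j. real (R i j)) \<le> inner_rw m n Rs (\<lambda>i j. real (R i j)) * (1 - 1 / real n)"
  proof (intro allI impI)
    fix RC Rs
    assume h1: "is_RC m n C (\<lambda>i j. real (R i j)) RC"
      and h2: "is_RC m n {R \<in> rankings m n. sat_constraint m n p Q U eps \<delta> R} (\<lambda>i j. real (R i j)) Rs"
    have RC: "RC \<in> rankings m n" "RC \<in> C" using h1 C_sub unfolding is_RC_def by blast+
    have "RC \<noteq> R" using RC R by blast
    then have "\<not> (\<Sum>j\<in>{1..n}. \<Sum>i\<in>{1..m}. RC i j * R i j) \<ge> n"
      using total_eq[OF R(1) RC(1)] by blast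
    then have a: "inner_rw m n RC (\<lambda>i j. real (R i j)) \<le> real n - 1"
      unfolding inner_nat by linarith
    have "inner_rw m n R (\<lambda>i j. real (R i j)) \<le> inner_rw m n Rs (\<lambda>i j. real (R i j))"
      using h2 R unfolding is_RC_def by blast
    then have b: "real n \<le> inner_rw m n Rs (\<lambda>i j. real (R i j))"
      unfolding inner_nat total_self[OF R(1)] by (simp only: of_nat_le_iff)
    have c: "0 \<le> 1 - 1 / real n" using n1 by simp
    have "real n - 1 = real n * (1 - 1 / real n)" using n1 by (simp add: field_simps)
    also have "\<dots> \<le> inner_rw m n Rs (\<lambda>i j. real (R i j)) * (1 - 1 / real n)"
      using b c by (rule mult_right_mono)
    finally show "inner_rw m n RC (\<lambda>i j. real (R i j)) \<le> inner_rw m n Rs (\<lambda>i j. real (R i j)) * (1 - 1 / real n)"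
      using a by linarith
  qed
  then show ?thesis by (intro disjI2 exI[of _ "\<lambda>i j. real (R i j)"]) auto
qed

end
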